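(* Let $-1<D<C\le 1$ and let $\alpha_1,\alpha_2>0$ satisfy $(\alpha_1-\alpha_2)(1-D^2)\ge e(C-D)(1+|D|)$. Let $f\in\mathcal{A}$ with $f(z)\neq 0$ for $0<|z|<1$, put $A_1=zf'(z)/f(z)$, $A_2=z^2f''(z)/f(z)$, $A_3=z^3f'''(z)/f(z)$, and $$Y_f(z)=1+\alpha_1\,(A_2-A_1^2+A_1)+\alpha_2\,(A_3+2A_2+2A_1^3-2A_1^2-3A_1A_2).$$ If $Y_f(z)\prec \dfrac{1+Cz}{1+Dz}$, then $f\in\mathcal{S}^*_e$.
   Context: $\mathbb{D}=\{z\in\mathbb{C}:|z|<1\}$. $\mathcal{A}$ is the class of analytic functions $f$ on $\mathbb{D}$ of the form $f(z)=z+a_2z^2+a_3z^3+\cdots$. For $g,h$ analytic in $\mathbb{D}$, $g\prec h$ means there is an analytic $w:\mathbb{D}\to\mathbb{D}$ with $w(0)=0$ and $g=h\circ w$. $\mathcal{S}^*_e=\{f\in\mathcal{A}: zf'(z)/f(z)\prec e^z\}$ (starlike functions associated with the exponential function). Note $Y_f(z)=1+\alpha_1 zp'(z)+\alpha_2 z^2p''(z)$ with $p=zf'/f$. *)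

theory Defs
  imports "HOL-Complex_Analysis.Complex_Analysis"
begin

abbreviation unit_disk :: "complex set" where
  "unit_disk \<equiv> ball 0 1"

definition subordinate :: "(complex \<Rightarrow> complex) \<Rightarrow> (complex \<Rightarrow> complex) \<Rightarrow> bool" where
  "subordinate g h \<longleftrightarrow>
     (\<exists>w. w holomorphic_on unit_disk \<and> w 0 = 0 \<and> (\<forall>z\<in>unit_disk. norm (w z) < 1)
          \<and> (\<forall>z\<in>unit_disk. g z = h (w z)))"

definition classA :: "(complex \<Rightarrow> complex) set" where
  "classA = {f. f holomorphic_on unit_disk \<and> f 0 = 0 \<and> deriv f 0 = 1}"

text \<open>z f'(z)/f(z), with its removable value 1 at z = 0.\<close>
definition pfun :: "(complex \<Rightarrow> complex) \<Rightarrow> complex \<Rightarrow> complex" where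
  "pfun f z = (if z = 0 then 1 else z * deriv f z / f z)"

definition starlike_exp :: "(complex \<Rightarrow> complex) set" where
  "starlike_exp = {f \<in> classA. subordinate (pfun f) exp}"

text \<open>The expression Y_f, with its removable value 1 at z = 0.\<close>
definition Yf :: "real \<Rightarrow> real \<Rightarrow> (complex \<Rightarrow> complex) \<Rightarrow> complex \<Rightarrow> complex" where
  "Yf a1 a2 f z =
     (if z = 0 then 1 else
      (let A1 = z * deriv f z / f z;
           A2 = z^2 * (deriv ^^ 2) f z / f z;
           A3 = z^3 * (deriv ^^ 3) f z / f z
       in 1 + of_real a1 * (A2 - A1^2 + A1)
            + of_real a2 * (A3 + 2*A2 + 2*A1^3 - 2*A1^2 - 3*A1*A2)))"

end

theory Submission
  imports Defs
begin

lemma ode_bound: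
  fixes g :: "complex \<Rightarrow> complex" and a b K :: real and z :: complex
  assumes hol: "g holomorphic_on ball 0 1" and a: "a > 0" and b: "b > 0" and K: "K \<ge> 0"
    and bnd: "\<And>u. norm u < 1 \<Longrightarrow> norm (of_real b * g u + of_real a * u * deriv g u) \<le> K * norm u"
    and z: "norm z < 1"
  shows "norm (g z) \<le> K * norm z / (a + b)"
proof (cases "g z = 0")
  case True
  then show ?thesis using a b K by simp
next
  case False
  define c where "c = b / a"
  have c: "c > 0" using a b by (simp add: c_def)
  define w where "w = cnj (g z)"
  define M where "M = norm (g z) * K * norm z / (a + b)"
  define \<Phi> where "\<Phi> t = Re (w * (of_real (t powr c) * g (of_real t * z))) - M * t powr (c + 1)" for t
  have inball: "norm (of_real t * z) < 1" if "0 \<le> t" "t \<le> 1" for t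
  proof -
    have "norm (of_real t * z) = t * norm z" using that by (simp add: norm_mult)
    also have "\<dots> \<le> norm z" using that by (simp add: mult_left_le_one_le)
    finally show ?thesis using z by simp
  qed
  have "\<Phi> 1 \<le> \<Phi> 0"
  proof (rule DERIV_nonpos_imp_decreasing_open[of 0 1 \<Phi>])
    fix t :: real assume t: "0 < t" "t < 1"
    have tz: "norm (of_real t * z) < 1" using inball t by simp
    have gd: "(g has_field_derivative deriv g (of_real t * z)) (at (of_real t * z))"
      using hol tz by (auto intro!: holomorphic_derivI[of g "ball 0 1"])
    have gd2: "((\<lambda>s. g (s * z)) has_field_derivative deriv g (of_real t * z) * z) (at (of_real t))"
    proof -
      have l: "((\<lambda>s. s * z) has_field_derivative z) (at (of_real t))"
        using DERIV_cmult_right[OF DERIV_ident, of z "of_real t" UNIV] by simp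
      show ?thesis using DERIV_chain2[where f=g and g="\<lambda>s. s * z", OF _ l] gd by simp
    qed
    have v1: "((\<lambda>s. g (of_real s * z)) has_vector_derivative deriv g (of_real t * z) * z) (at t)"
      using has_vector_derivative_real_field[OF gd2] by simp
    have v2: "((\<lambda>s. of_real (s powr c) :: complex) has_vector_derivative of_real (c * t powr (c - 1))) (at t)"
      by (intro has_vector_derivative_of_real has_real_derivative_powr t)
    have v3: "((\<lambda>s. w * (of_real (s powr c) * g (of_real s * z))) has_vector_derivative
        w * (of_real (t powr c) * (deriv g (of_real t * z) * z) + of_real (c * t powr (c - 1)) * g (of_real t * z))) (at t)"
      by (intro has_vector_derivative_mult_right has_vector_derivative_mult v1 v2)
    have d: "(\<Phi> has_real_derivative
        Re (w * (of_real (t powr c) * (deriv g (of_real t * z) * z) + of_real (c * t powr (c - 1)) * g (of_real t * z)))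
        - M * ((c + 1) * t powr c)) (at t)"
      unfolding \<Phi>_def
      by (intro DERIV_diff has_field_derivative_Re v3 DERIV_cmult)
         (use has_real_derivative_powr[OF t(1), of "c+1"] in simp)
    define X where "X = of_real b * g (of_real t * z) + of_real a * (of_real t * z) * deriv g (of_real t * z)"
    have eq: "of_real (t powr c) * (deriv g (of_real t * z) * z) + of_real (c * t powr (c - 1)) * g (of_real t * z)
        = of_real (t powr (c - 1) / a) * X"
    proof -
      have "t powr c = t powr (c - 1) * t" using t by (simp add: powr_diff)
      then show ?thesis using a unfolding X_def c_def by (simp add: field_simps)
    qed
    have nX: "norm X \<le> K * (t * norm z)"
      using bnd[OF tz] t unfolding X_def by (simp add: norm_mult)
    have "Re (w * (of_real (t powr (c - 1) / a) * X)) \<le> norm (w * (of_real (t powr (c - 1) / a) * X))"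
      by (rule complex_Re_le_cmod)
    also have "\<dots> = norm (g z) * (t powr (c - 1) / a) * norm X"
      using a t by (simp add: w_def norm_mult norm_divide)
    also have "\<dots> \<le> norm (g z) * (t powr (c - 1) / a) * (K * (t * norm z))"
      using nX a t by (intro mult_left_mono) auto
    also have "\<dots> = M * ((c + 1) * t powr c)"
    proof -
      have "t powr c = t powr (c - 1) * t" using t by (simp add: powr_diff)
      moreover have "(c + 1) / (a + b) = 1 / a"
      proof -
        have "a + b \<noteq> 0" "a \<noteq> 0" using a b by auto
        have "c + 1 = (a + b) / a" using \<open>a \<noteq> 0\<close> by (simp add: c_def field_simps)
        then show ?thesis using \<open>a + b \<noteq> 0\<close> by simp
      qed
      ultimately have "M * ((c + 1) * t powr c) = norm (g z) * K * norm z * (1 / a) * (t powr (c - 1) * t)"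
        unfolding M_def by (metis (no_types, lifting) mult.assoc mult.commute times_divide_eq_right)
      then show ?thesis by (simp add: mult_ac)
    qed
    finally have "Re (w * (of_real (t powr (c - 1) / a) * X)) - M * ((c + 1) * t powr c) \<le> 0" by simp
    moreover have "(\<Phi> has_real_derivative Re (w * (of_real (t powr (c - 1) / a) * X)) - M * ((c + 1) * t powr c)) (at t)"
      using d unfolding eq .
    ultimately show "\<exists>y. (\<Phi> has_real_derivative y) (at t) \<and> y \<le> 0" by blast
  next
    have cg: "continuous_on {0..1::real} (\<lambda>t. g (of_real t * z))"
    proof (rule continuous_on_compose2[of "ball 0 1" g])
      show "continuous_on (ball 0 1) g" using hol by (rule holomorphic_on_imp_continuous_on)
      show "continuous_on {0..1::real} (\<lambda>t. of_real t * z)" by (intro continuous_intros)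
      show "(\<lambda>t. of_real t * z) ` {0..1::real} \<subseteq> ball 0 1" using inball by auto
    qed
    show "continuous_on {0..1} \<Phi>"
      unfolding \<Phi>_def using c
      by (intro continuous_intros continuous_on_powr' cg) auto
  qed simp
  moreover have "\<Phi> 0 = 0" using c by (simp add: \<Phi>_def)
  moreover have "\<Phi> 1 = norm (g z) ^ 2 - M"
    using cmod_power2[of "g z"] by (simp add: \<Phi>_def w_def power2_eq_square)
  ultimately have "norm (g z) * norm (g z) \<le> norm (g z) * (K * norm z / (a + b))"
    by (simp add: M_def power2_eq_square)
  moreover have "norm (g z) > 0" using False by simp
  ultimately show ?thesis by (metis mult_le_cancel_left_pos times_divide_eq_right)
qed


lemma deriv_eq_on_open:
  assumes "open S" "z \<in> S" "\<And>u. u \<in> S \<Longrightarrow> F u = G u"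
  shows "deriv F z = deriv G z"
proof (rule deriv_cong_ev[OF _ refl])
  have "eventually (\<lambda>u. u \<in> S) (nhds z)" using assms(1,2) by (rule eventually_nhds_in_open)
  then show "eventually (\<lambda>u. F u = G u) (nhds z)" by (rule eventually_mono) (use assms(3) in blast)
qed


lemma Ln_small:
  fixes u :: complex
  assumes "norm (u - 1) < 1 / exp 1"
  shows "norm (Ln u) < 1"
proof -
  define r where "r = 1 / exp (1::real)"
  have e2: "exp (1::real) \<ge> 2" using exp_ge_add_one_self[of 1] by simp
  have r0: "0 < r" by (simp add: r_def)
  have "1 / exp (1::real) \<le> 1 / 2" by (rule divide_left_mono) (use e2 in auto)
  then have r: "0 < r" "r \<le> 1/2" using r0 by (auto simp: r_def)
  define T where "T = ball (1::complex) r"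
  have inT: "\<And>v. v \<in> T \<Longrightarrow> norm v \<ge> 1 - r \<and> Re v > 0"
  proof -
    fix v assume "v \<in> T"
    then have "norm (1 - v) < r" by (simp add: T_def dist_norm)
    then have d: "norm (v - 1) < r" using norm_minus_commute[of 1 v] by simp
    have "1 - norm v \<le> norm (1 - v)" using norm_triangle_ineq2[of 1 v] by simp
    then have "1 - norm v \<le> norm (v - 1)" using norm_minus_commute[of 1 v] by simp
    moreover have "1 - Re v \<le> norm (v - 1)" using abs_Re_le_cmod[of "v - 1"] by simp
    ultimately show "norm v \<ge> 1 - r \<and> Re v > 0" using d r by linarith
  qed
  have dLn: "(Ln has_field_derivative inverse v) (at v within T)" if v: "v \<in> T" for v
  proof -
    have "Re v > 0" using inT[OF v] by blast
    then have "v \<notin> \<real>\<^sub>\<le>\<^sub>0" by (simp add: complex_nonpos_Reals_iff)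
    then show ?thesis by (rule has_field_derivative_at_within[OF has_field_derivative_Ln])
  qed
  have nLn: "norm (inverse v) \<le> 1 / (1 - r)" if v: "v \<in> T" for v
  proof -
    have "norm v \<ge> 1 - r" using inT[OF v] by simp
    moreover have "1 - r > 0" using r by simp
    ultimately have "inverse (norm v) \<le> inverse (1 - r)" by (rule le_imp_inverse_le)
    then show ?thesis by (simp add: norm_inverse inverse_eq_divide norm_divide)
  qed
  have uT: "u \<in> T" using assms norm_minus_commute[of 1 u] by (simp add: T_def r_def dist_norm)
  have oT: "1 \<in> T" using r0 by (simp add: T_def)
  have cT: "convex T" unfolding T_def by (rule convex_ball)
  have "norm (Ln u - Ln 1) \<le> (1 / (1 - r)) * norm (u - 1)"
    by (rule field_differentiable_bound[of T Ln "\<lambda>v. inverse v" "1 / (1 - r)" u 1, OF cT dLn nLn uT oT])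
  also have "\<dots> < (1 / (1 - r)) * r"
  proof (rule mult_strict_left_mono)
    show "norm (u - 1) < r" using assms by (simp add: r_def)
    show "0 < 1 / (1 - r)" using r by simp
  qed
  also have "\<dots> \<le> 1"
  proof -
    have "r \<le> 1 - r" using r by simp
    then have "r / (1 - r) \<le> 1" using r by (simp add: divide_le_eq)
    then show ?thesis by simp
  qed
  finally show ?thesis by simp
qed

theorem corollary4p2:
  fixes C D a1 a2 :: real and f :: "complex \<Rightarrow> complex"
  assumes "-1 < D" "D < C" "C \<le> 1"
    and "a1 > 0" "a2 > 0"
    and "(a1 - a2) * (1 - D^2) \<ge> exp 1 * (C - D) * (1 + \<bar>D\<bar>)"
    and "f \<in> classA"
    and "\<forall>z. 0 < norm z \<and> norm z < 1 \<longrightarrow> f z \<noteq> 0"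
    and "subordinate (Yf a1 a2 f) (\<lambda>z. (1 + of_real C * z) / (1 + of_real D * z))"
  shows "f \<in> starlike_exp"
proof -
  have holf: "f holomorphic_on ball 0 1" and f0: "f 0 = 0" and df0: "deriv f 0 = 1"
    using assms(7) by (auto simp: classA_def)
  define B where "B = ball (0::complex) 1"
  define S where "S = B - {0}"
  have oB: "open B" and oS: "open S" by (auto simp: B_def S_def)
  have SB: "S \<subseteq> B" by (auto simp: S_def)
  have fnz: "\<And>z. z \<in> S \<Longrightarrow> f z \<noteq> 0" using assms(8) by (auto simp: S_def B_def)
  have holfB: "f holomorphic_on B" using holf by (simp add: B_def)
  define k where "k = (\<lambda>z. if z = 0 then deriv f 0 else (f z - f 0) / (z - 0))"
  have holk: "k holomorphic_on B" unfolding k_def B_def by (rule pole_lemma[OF holf]) simp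
  have fk: "\<And>z. f z = z * k z" using f0 by (auto simp: k_def)
  have fk': "f = (\<lambda>z. z * k z)" using fk by (rule ext)
  have knz: "\<And>z. z \<in> B \<Longrightarrow> k z \<noteq> 0"
  proof -
    fix z assume z: "z \<in> B"
    show "k z \<noteq> 0"
    proof (cases "z = 0")
      case True then show ?thesis using df0 by (simp add: k_def)
    next
      case False then have "z \<in> S" using z by (simp add: S_def)
      then show ?thesis using fnz fk by force
    qed
  qed
  have dk: "\<And>z. z \<in> B \<Longrightarrow> (k has_field_derivative deriv k z) (at z)"
    using holk oB by (auto intro: holomorphic_derivI)
  have dfk: "\<And>z. z \<in> B \<Longrightarrow> deriv f z = k z + z * deriv k z"
  proof -
    fix z assume z: "z \<in> B"
    have "((\<lambda>z. z * k z) has_field_derivative (1 * k z + deriv k z * z)) (at z)"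
      by (rule DERIV_mult[OF DERIV_ident dk[OF z]])
    then show "deriv f z = k z + z * deriv k z" unfolding fk' by (simp add: DERIV_imp_deriv mult.commute)
  qed
  define P where "P = (\<lambda>z. 1 + z * deriv k z / k z)"
  have holP: "P holomorphic_on B" unfolding P_def
    using knz by (intro holomorphic_intros holomorphic_deriv holk oB) auto
  define p where "p = pfun f"
  have pP: "\<And>z. z \<in> B \<Longrightarrow> P z = p z"
  proof -
    fix z assume z: "z \<in> B"
    show "P z = p z"
    proof (cases "z = 0")
      case True then show ?thesis by (simp add: P_def p_def pfun_def)
    next
      case False then show ?thesis using knz[OF z] dfk[OF z] fk[of z]
        by (simp add: P_def p_def pfun_def field_simps)
    qed
  qed
  have holp: "p holomorphic_on B" by (rule holomorphic_transform[OF holP pP])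
  have p0: "p 0 = 1" by (simp add: p_def pfun_def)
  define q where "q = (\<lambda>z. deriv f z / f z)"
  have holdf: "deriv f holomorphic_on B" using holfB oB by (rule holomorphic_deriv)
  have holq: "q holomorphic_on S" unfolding q_def
    using fnz holdf holfB SB oS by (intro holomorphic_intros) (auto intro: holomorphic_on_subset)
  have holq1: "deriv q holomorphic_on S" using holq oS by (rule holomorphic_deriv)
  have dq: "\<And>u. u \<in> S \<Longrightarrow> (q has_field_derivative deriv q u) (at u)"
    using holq oS by (auto intro: holomorphic_derivI)
  have dq1: "\<And>u. u \<in> S \<Longrightarrow> (deriv q has_field_derivative deriv (deriv q) u) (at u)"
    using holq1 oS by (auto intro: holomorphic_derivI)
  have dff: "\<And>u. u \<in> S \<Longrightarrow> (f has_field_derivative deriv f u) (at u)"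
    using holfB oB SB by (auto intro: holomorphic_derivI)
  have e1: "\<And>u. u \<in> S \<Longrightarrow> deriv f u = q u * f u" using fnz by (simp add: q_def)
  have e2: "\<And>u. u \<in> S \<Longrightarrow> deriv (deriv f) u = (deriv q u + q u ^ 2) * f u"
  proof -
    fix u assume u: "u \<in> S"
    have "deriv (deriv f) u = deriv (\<lambda>v. q v * f v) u"
      by (rule deriv_eq_on_open[OF oS u e1])
    also have "\<dots> = deriv q u * f u + deriv f u * q u"
      by (rule DERIV_imp_deriv[OF DERIV_mult[OF dq[OF u] dff[OF u]]])
    finally show "deriv (deriv f) u = (deriv q u + q u ^ 2) * f u"
      using e1[OF u] by (simp add: algebra_simps power2_eq_square)
  qed
  have e3: "\<And>u. u \<in> S \<Longrightarrow> deriv (deriv (deriv f)) u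
      = (deriv (deriv q) u + 2 * q u * deriv q u) * f u + (deriv q u + q u ^ 2) * (q u * f u)"
  proof -
    fix u assume u: "u \<in> S"
    have "deriv (deriv (deriv f)) u = deriv (\<lambda>v. (deriv q v + q v ^ 2) * f v) u"
      by (rule deriv_eq_on_open[OF oS u e2])
    also have "\<dots> = (deriv (deriv q) u + 2 * q u * deriv q u) * f u
                     + deriv f u * (deriv q u + q u ^ 2)"
    proof (rule DERIV_imp_deriv)
      show "((\<lambda>v. (deriv q v + q v ^ 2) * f v) has_field_derivative
         (deriv (deriv q) u + 2 * q u * deriv q u) * f u + deriv f u * (deriv q u + q u ^ 2)) (at u)"
        by (rule derivative_eq_intros dq1[OF u] dq[OF u] dff[OF u] refl)+ (simp add: algebra_simps)
    qed
    finally show "deriv (deriv (deriv f)) u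
      = (deriv (deriv q) u + 2 * q u * deriv q u) * f u + (deriv q u + q u ^ 2) * (q u * f u)"
      using e1[OF u] by (simp add: algebra_simps)
  qed
  have ep1: "\<And>u. u \<in> S \<Longrightarrow> p u = u * q u" by (auto simp: p_def pfun_def q_def S_def)
  have ep2: "\<And>u. u \<in> S \<Longrightarrow> deriv p u = q u + u * deriv q u"
  proof -
    fix u assume u: "u \<in> S"
    have "deriv p u = deriv (\<lambda>v. v * q v) u" by (rule deriv_eq_on_open[OF oS u ep1])
    also have "\<dots> = 1 * q u + deriv q u * u"
      by (rule DERIV_imp_deriv[OF DERIV_mult[OF DERIV_ident dq[OF u]]])
    finally show "deriv p u = q u + u * deriv q u" by (simp add: mult.commute)
  qed
  have ep3: "\<And>u. u \<in> S \<Longrightarrow> deriv (deriv p) u = 2 * deriv q u + u * deriv (deriv q) u"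
  proof -
    fix u assume u: "u \<in> S"
    have "deriv (deriv p) u = deriv (\<lambda>v. q v + v * deriv q v) u" by (rule deriv_eq_on_open[OF oS u ep2])
    also have "\<dots> = deriv q u + (1 * deriv q u + deriv (deriv q) u * u)"
      by (rule DERIV_imp_deriv[OF DERIV_add[OF dq[OF u] DERIV_mult[OF DERIV_ident dq1[OF u]]]])
    finally show "deriv (deriv p) u = 2 * deriv q u + u * deriv (deriv q) u" by (simp add: algebra_simps)
  qed
  have holdp: "deriv p holomorphic_on B" using holp oB by (rule holomorphic_deriv)
  define g where "g = (\<lambda>z. z * deriv p z)"
  have holg: "g holomorphic_on B" unfolding g_def using holp oB by (intro holomorphic_intros)
  have ddp: "\<And>z. z \<in> B \<Longrightarrow> (deriv p has_field_derivative deriv (deriv p) z) (at z)"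
    using holdp oB by (auto intro: holomorphic_derivI)
  have dg: "\<And>z. z \<in> B \<Longrightarrow> deriv g z = deriv p z + z * deriv (deriv p) z"
  proof -
    fix z assume z: "z \<in> B"
    have "deriv g z = 1 * deriv p z + deriv (deriv p) z * z" unfolding g_def
      by (rule DERIV_imp_deriv[OF DERIV_mult[OF DERIV_ident ddp[OF z]]])
    then show "deriv g z = deriv p z + z * deriv (deriv p) z" by (simp add: mult.commute)
  qed
  have Yeq: "\<And>z. z \<in> B \<Longrightarrow> Yf a1 a2 f z - 1 = of_real (a1 - a2) * g z + of_real a2 * z * deriv g z"
  proof -
    fix z assume z: "z \<in> B"
    show "Yf a1 a2 f z - 1 = of_real (a1 - a2) * g z + of_real a2 * z * deriv g z"
    proof (cases "z = 0")
      case True then show ?thesis by (simp add: Yf_def g_def)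
    next
      case False
      then have zS: "z \<in> S" using z by (simp add: S_def)
      have fz: "f z \<noteq> 0" using fnz[OF zS] .
      have d2: "(deriv ^^ 2) f = deriv (deriv f)" by (simp add: numeral_2_eq_2)
      have d3: "(deriv ^^ 3) f = deriv (deriv (deriv f))" by (simp add: numeral_3_eq_3)
      show ?thesis
        unfolding Yf_def Let_def d2 d3 dg[OF z] unfolding g_def
        using False fz e1[OF zS] e2[OF zS] e3[OF zS] ep2[OF zS] ep3[OF zS]
        by (simp add: field_simps power2_eq_square power3_eq_cube)
    qed
  qed
  obtain w where w: "w holomorphic_on unit_disk" "w 0 = 0" "\<forall>z\<in>unit_disk. norm (w z) < 1"
    "\<forall>z\<in>unit_disk. Yf a1 a2 f z = (1 + of_real C * w z) / (1 + of_real D * w z)"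
    using assms(9) unfolding subordinate_def by blast
  have D1: "\<bar>D\<bar> < 1" using assms(1-3) by auto
  define R where "R = (C - D) / (1 - \<bar>D\<bar>)"
  have R0: "R \<ge> 0" using D1 assms(2) by (simp add: R_def)
  have bndY: "\<And>u. norm u < 1 \<Longrightarrow> norm (Yf a1 a2 f u - 1) \<le> R * norm u"
  proof -
    fix u :: complex assume u: "norm u < 1"
    define v where "v = w u"
    have vu: "norm v \<le> norm u" unfolding v_def
      using Schwarz_Lemma(1)[of w u] w u by auto
    have v1: "norm v < 1" using w u by (simp add: v_def)
    have Dv: "norm (of_real D * v) \<le> \<bar>D\<bar>" using v1 by (simp add: norm_mult mult_right_le_one_le)
    have den: "norm (1 + of_real D * v) \<ge> 1 - \<bar>D\<bar>"
      using norm_triangle_ineq2[of 1 "- (of_real D * v)"] Dv by (simp add: norm_minus_commute)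
    have denpos: "1 - \<bar>D\<bar> > 0" using D1 by simp
    have dnz: "1 + of_real D * v \<noteq> 0" using den denpos by auto
    have "Yf a1 a2 f u - 1 = of_real (C - D) * v / (1 + of_real D * v)"
      using w u dnz by (simp add: v_def field_simps)
    then have "norm (Yf a1 a2 f u - 1) = (C - D) * norm v / norm (1 + of_real D * v)"
      using assms(2) by (simp add: norm_mult norm_divide flip: of_real_diff)
    also have "\<dots> \<le> (C - D) * norm v / (1 - \<bar>D\<bar>)"
      using den denpos assms(2) by (intro divide_left_mono) (auto intro!: mult_pos_pos)
    also have "\<dots> \<le> (C - D) * norm u / (1 - \<bar>D\<bar>)"
      using vu denpos assms(2) by (intro divide_right_mono mult_left_mono) auto
    finally show "norm (Yf a1 a2 f u - 1) \<le> R * norm u" by (simp add: R_def)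
  qed
  have e1pos: "exp (1::real) > 0" by simp
  have ab: "a1 - a2 > 0"
  proof -
    have "exp 1 * (C - D) * (1 + \<bar>D\<bar>) > 0" using assms(2) by simp
    moreover have "1 - D^2 > 0" using D1 by (simp add: abs_square_less_1)
    ultimately have "0 < (a1 - a2) * (1 - D^2)" using assms(6) by linarith
    then show ?thesis using \<open>1 - D^2 > 0\<close> by (simp add: zero_less_mult_iff)
  qed
  have Rle: "R \<le> (a1 - a2) / exp 1"
  proof -
    have "1 - D^2 = (1 - \<bar>D\<bar>) * (1 + \<bar>D\<bar>)" by (simp add: algebra_simps power2_eq_square)
    with assms(6) have "(a1 - a2) * (1 - \<bar>D\<bar>) * (1 + \<bar>D\<bar>) \<ge> exp 1 * (C - D) * (1 + \<bar>D\<bar>)"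
      by (simp add: mult.assoc)
    then have "(a1 - a2) * (1 - \<bar>D\<bar>) \<ge> exp 1 * (C - D)"
      using mult_le_cancel_right_pos[of "1 + \<bar>D\<bar>" "exp 1 * (C - D)" "(a1 - a2) * (1 - \<bar>D\<bar>)"] by simp
    then have "(C - D) \<le> (a1 - a2) * (1 - \<bar>D\<bar>) / exp 1" by (simp add: pos_le_divide_eq mult.commute)
    then show ?thesis using D1 unfolding R_def by (simp add: pos_divide_le_eq)
  qed
  have gb: "\<And>z. norm z < 1 \<Longrightarrow> norm (g z) \<le> R * norm z / (a2 + (a1 - a2))"
  proof -
    fix z :: complex assume z: "norm z < 1"
    have hg: "g holomorphic_on ball 0 1" using holg by (simp add: B_def)
    have hb: "\<And>u. norm u < 1 \<Longrightarrow> norm (of_real (a1 - a2) * g u + of_real a2 * u * deriv g u) \<le> R * norm u"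
    proof -
      fix u :: complex assume u: "norm u < 1"
      then have uB: "u \<in> B" by (simp add: B_def)
      have "of_real (a1 - a2) * g u + of_real a2 * u * deriv g u = Yf a1 a2 f u - 1"
        using Yeq[OF uB] by simp
      then show "norm (of_real (a1 - a2) * g u + of_real a2 * u * deriv g u) \<le> R * norm u"
        using bndY[OF u] by simp
    qed
    show "norm (g z) \<le> R * norm z / (a2 + (a1 - a2))"
      by (rule ode_bound[of g a2 "a1 - a2" R z, OF hg assms(5) ab R0 hb z])
  qed
  have gb2: "\<And>z. norm z < 1 \<Longrightarrow> norm (g z) \<le> norm z / exp 1"
  proof -
    fix z :: complex assume z: "norm z < 1"
    have "R / a1 \<le> 1 / exp 1"
    proof -
      have "(a1 - a2) / exp 1 \<le> a1 / exp 1" using assms(5) by (intro divide_right_mono) auto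
      then have "R \<le> a1 / exp 1" using Rle by linarith
      then have "R / a1 \<le> (a1 / exp 1) / a1" using assms(4) by (rule divide_right_mono[OF _ less_imp_le])
      then show ?thesis using assms(4) by simp
    qed
    then have "(R / a1) * norm z \<le> (1 / exp 1) * norm z" by (rule mult_right_mono) simp
    then have "R * norm z / a1 \<le> norm z / exp 1" by simp
    moreover have "norm (g z) \<le> R * norm z / a1" using gb[OF z] by simp
    ultimately show "norm (g z) \<le> norm z / exp 1" by linarith
  qed
  have dpb1: "\<And>z. z \<in> B \<Longrightarrow> z \<noteq> 0 \<Longrightarrow> norm (deriv p z) \<le> 1 / exp 1"
  proof -
    fix z assume z: "z \<in> B" "z \<noteq> 0"
    have nz: "norm z < 1" using z by (simp add: B_def)
    have "norm z * norm (deriv p z) \<le> norm z * (1 / exp 1)"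
      using gb2[OF nz] by (simp add: g_def norm_mult)
    moreover have npos: "norm z > 0" using z(2) by simp
    ultimately show "norm (deriv p z) \<le> 1 / exp 1" using mult_le_cancel_left_pos[OF npos] by blast
  qed
  have dpb: "\<And>z. z \<in> B \<Longrightarrow> norm (deriv p z) \<le> 1 / exp 1"
  proof -
    fix z assume z: "z \<in> B"
    show "norm (deriv p z) \<le> 1 / exp 1"
    proof (cases "z = 0")
      case False then show ?thesis using dpb1 z by blast
    next
      case True
      have "continuous_on B (deriv p)" using holdp by (rule holomorphic_on_imp_continuous_on)
      then have "isCont (deriv p) 0" using oB by (simp add: continuous_on_eq_continuous_at B_def)
      then have lim: "(deriv p \<longlongrightarrow> deriv p 0) (at 0)" by (simp add: isCont_def)
      have ev: "eventually (\<lambda>x. norm (deriv p x) \<le> 1 / exp 1) (at 0)"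
        unfolding eventually_at
        by (rule exI[of _ 1]) (auto intro!: dpb1 simp: B_def)
      show ?thesis using Lim_norm_ubound[OF trivial_limit_at lim ev] True by simp
    qed
  qed
  have pb: "\<And>z. z \<in> B \<Longrightarrow> norm (p z - p 0) \<le> 1 / exp 1 * norm (z - 0)"
  proof -
    fix z assume z: "z \<in> B"
    show "norm (p z - p 0) \<le> 1 / exp 1 * norm (z - 0)"
    proof (rule field_differentiable_bound[of B p "deriv p"])
      show "convex B" by (simp add: B_def)
      show "\<And>u. u \<in> B \<Longrightarrow> (p has_field_derivative deriv p u) (at u within B)"
        using holp oB by (auto intro: holomorphic_derivI)
      show "\<And>u. u \<in> B \<Longrightarrow> norm (deriv p u) \<le> 1 / exp 1" by (rule dpb)
      show "z \<in> B" by (rule z)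
      show "0 \<in> B" by (simp add: B_def)
    qed
  qed
  have pb2: "\<And>z. z \<in> B \<Longrightarrow> norm (p z - 1) < 1 / exp 1"
  proof -
    fix z assume z: "z \<in> B"
    have "norm (p z - 1) \<le> 1 / exp 1 * norm z" using pb[OF z] p0 by simp
    also have "\<dots> < 1 / exp 1" using z by (simp add: B_def divide_strict_right_mono)
    finally show "norm (p z - 1) < 1 / exp 1" .
  qed
  have pnz: "\<And>z. z \<in> B \<Longrightarrow> p z \<notin> \<real>\<^sub>\<le>\<^sub>0"
  proof -
    fix z assume z: "z \<in> B"
    have e2: "exp (1::real) \<ge> 2" using exp_ge_add_one_self[of 1] by simp
    have "1 - Re (p z) \<le> norm (p z - 1)" using abs_Re_le_cmod[of "p z - 1"] by simp
    moreover have "1 / exp 1 \<le> (1::real)" using e2 by simp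
    ultimately have "Re (p z) > 0" using pb2[OF z] by linarith
    then show "p z \<notin> \<real>\<^sub>\<le>\<^sub>0" by (auto simp: complex_nonpos_Reals_iff)
  qed
  define W where "W = (\<lambda>z. Ln (p z))"
  have "subordinate (pfun f) exp"
    unfolding subordinate_def
  proof (intro exI[of _ W] conjI ballI)
    show "W holomorphic_on unit_disk" unfolding W_def using holp pnz
      by (intro holomorphic_on_Ln') (auto simp: B_def)
    show "W 0 = 0" by (simp add: W_def p0)
    fix z :: complex assume z: "z \<in> unit_disk"
    then have zB: "z \<in> B" by (simp add: B_def)
    show "norm (W z) < 1" unfolding W_def by (rule Ln_small[OF pb2[OF zB]])
    have "p z \<noteq> 0" using pnz[OF zB] by auto
    then show "pfun f z = exp (W z)" by (simp add: W_def p_def)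
  qed
  then show ?thesis using assms(7) by (simp add: starlike_exp_def)
qed

end
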